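(* Let $\mathbf f$ be a face degree sequence, $g\ge0$, and $p\ge j_0\ge1$. Then \[|\mathbf f|\,\beta_g(\mathbf f-\mathbf 1_{j_0})\ge j_0f_{j_0}\,\beta_g(\mathbf f-\mathbf 1_p).\] In particular, if $j_0f_{j_0}\ge\delta|\mathbf f|$ for some $\delta>0$, then $\beta_g(\mathbf f-\mathbf 1_{j_0})\ge\delta\,\beta_g(\mathbf f-\mathbf 1_p)$.
   Context: A face degree sequence is $\mathbf f=(f_j)_{j\ge1}$ of nonnegative integers, eventually zero; $|\mathbf f|=\sum_jjf_j$; $\mathbf 1_j$ is the indicator sequence of $j$. $\beta_g(\mathbf f)$ is the number of rooted bipartite maps of genus $g$ with $f_j$ faces of degree $2j$ for all $j$ (zero if some entry of $\mathbf f$ is negative). *)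

theory Defs
  imports Complex_Main "HOL-Combinatorics.Permutations"
begin

text \<open>A face degree sequence is represented as a function f :: nat \<Rightarrow> nat with finite
support and f 0 = 0 (only indices j \<ge> 1 are meaningful).  Sequences that may have
negative entries (such as f - 1_j) are represented as nat \<Rightarrow> int.\<close>

definition face_deg_seq :: "(nat \<Rightarrow> nat) \<Rightarrow> bool" where
  "face_deg_seq f \<longleftrightarrow> f 0 = 0 \<and> finite {j. f j \<noteq> 0}"

definition fsize :: "(nat \<Rightarrow> int) \<Rightarrow> int" where
  "fsize f = (\<Sum>j\<in>{j. f j \<noteq> 0}. int j * f j)"

definition ind_seq :: "nat \<Rightarrow> nat \<Rightarrow> int" where
  "ind_seq j = (\<lambda>i. if i = j then 1 else 0)"

text \<open>Bipartite maps with n edges labelled 0..n-1 are encoded as pairs of permutations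
(sigma, alpha) of {..<n}: sigma gives the cyclic order of edges around black vertices,
alpha around white vertices; faces are the cycles of sigma o alpha, a cycle of length j
corresponding to a face of degree 2j.  Connectivity is transitivity of the generated group.\<close>

definition perm_orbit :: "(nat \<Rightarrow> nat) \<Rightarrow> nat \<Rightarrow> nat set" where
  "perm_orbit \<pi> x = {(\<pi> ^^ k) x | k. True}"

definition perm_cycles :: "(nat \<Rightarrow> nat) \<Rightarrow> nat \<Rightarrow> nat set set" where
  "perm_cycles \<pi> n = perm_orbit \<pi> ` {..<n}"

definition transitive_pair :: "(nat \<Rightarrow> nat) \<Rightarrow> (nat \<Rightarrow> nat) \<Rightarrow> nat \<Rightarrow> bool" where
  "transitive_pair \<sigma> \<alpha> n \<longleftrightarrow>
     (\<forall>x<n. \<forall>y<n. (x, y) \<in> ({(u, \<sigma> u) | u. True} \<union> {(u, \<alpha> u) | u. True})\<^sup>*)"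

definition labelled_bip_maps :: "nat \<Rightarrow> (nat \<Rightarrow> nat) \<Rightarrow> nat \<Rightarrow> ((nat \<Rightarrow> nat) \<times> (nat \<Rightarrow> nat)) set" where
  "labelled_bip_maps g f n = {(\<sigma>, \<alpha>).
      \<sigma> permutes {..<n} \<and> \<alpha> permutes {..<n} \<and> transitive_pair \<sigma> \<alpha> n \<and>
      (\<forall>j\<ge>1. card {c \<in> perm_cycles (\<sigma> \<circ> \<alpha>) n. card c = j} = f j) \<and>
      int (card (perm_cycles \<sigma> n)) + int (card (perm_cycles \<alpha> n)) - int n
        + int (card (perm_cycles (\<sigma> \<circ> \<alpha>) n)) = 2 - 2 * int g}"

text \<open>Number of rooted bipartite maps of genus g with f_j faces of degree 2j:
each rooted map with n edges corresponds to exactly (n-1)! labelled pairs.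
Zero if some entry is negative.\<close>

definition beta :: "nat \<Rightarrow> (nat \<Rightarrow> int) \<Rightarrow> nat" where
  "beta g f = (if (\<exists>j. f j < 0) then 0 else
     (let n = nat (fsize f) in
       card (labelled_bip_maps g (\<lambda>j. nat (f j)) n) div fact (n - 1)))"

end

theory Submission
  imports Defs "HOL-Combinatorics.Orbits"
begin

lemma po_self: "x \<in> perm_orbit \<pi> x"
  unfolding perm_orbit_def by (auto intro: exI[of _ 0])

lemma po_iter: "(\<pi> ^^ k) x \<in> perm_orbit \<pi> x"
  unfolding perm_orbit_def by blast

lemma po_step: "y \<in> perm_orbit \<pi> x \<Longrightarrow> \<pi> y \<in> perm_orbit \<pi> x"
proof -
  assume "y \<in> perm_orbit \<pi> x"
  then obtain k where "y = (\<pi> ^^ k) x" unfolding perm_orbit_def by auto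
  then have "\<pi> y = (\<pi> ^^ Suc k) x" by simp
  then show ?thesis unfolding perm_orbit_def by blast
qed

lemma po_closed:
  assumes "x \<in> T" "\<And>y. y \<in> T \<Longrightarrow> \<pi> y \<in> T"
  shows "perm_orbit \<pi> x \<subseteq> T"
proof
  fix y assume "y \<in> perm_orbit \<pi> x"
  then obtain k where "y = (\<pi> ^^ k) x" unfolding perm_orbit_def by auto
  moreover have "(\<pi> ^^ k) x \<in> T" for k by (induction k) (use assms in auto)
  ultimately show "y \<in> T" by simp
qed

lemma po_orbit: "permutation \<pi> \<Longrightarrow> perm_orbit \<pi> x = orbit \<pi> x"
  by (simp add: perm_orbit_def orbit_altdef_permutation)

lemma po_eq: "permutation \<pi> \<Longrightarrow> y \<in> perm_orbit \<pi> x \<Longrightarrow> perm_orbit \<pi> y = perm_orbit \<pi> x"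
  by (simp add: po_orbit) (metis cyclic_on_orbit' orbit_cyclic_eq3)

lemma po_disj: "permutation \<pi> \<Longrightarrow> perm_orbit \<pi> x \<noteq> perm_orbit \<pi> y \<Longrightarrow> perm_orbit \<pi> x \<inter> perm_orbit \<pi> y = {}"
  by (metis disjoint_iff po_eq)

lemma po_fix: "\<pi> x = x \<Longrightarrow> perm_orbit \<pi> x = {x}"
  using po_closed[of x "{x}" \<pi>] po_self[of x \<pi>] by auto

lemma po_sub: "\<pi> permutes S \<Longrightarrow> x \<in> S \<Longrightarrow> perm_orbit \<pi> x \<subseteq> S"
  by (rule po_closed) (auto simp: permutes_in_image)

lemma perm_nat: "\<pi> permutes {..<m::nat} \<Longrightarrow> permutation \<pi>"
  using permutation_permutes by blast

definition ins :: "(nat \<Rightarrow> nat) \<Rightarrow> nat \<Rightarrow> nat \<Rightarrow> nat \<Rightarrow> nat \<Rightarrow> nat" where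
  "ins \<pi> a m n x = (if x = a then m else if m \<le> x \<and> x < n - 1 then Suc x
      else if x = n - 1 then \<pi> a else \<pi> x)"

locale insl =
  fixes \<pi> :: "nat \<Rightarrow> nat" and a m n :: nat
  assumes pp: "\<pi> permutes {..<m}" and am: "a < m" and mn: "m < n"
begin

definition Oa where "Oa = perm_orbit \<pi> a"
definition Xs where "Xs = {m..<n}"

lemma pi_lt: "x < m \<Longrightarrow> \<pi> x < m"
  using pp permutes_in_image by fastforce

lemma pi_ge: "m \<le> x \<Longrightarrow> \<pi> x = x"
  using pp permutes_not_in by fastforce

lemma pi_inj: "\<pi> x = \<pi> y \<Longrightarrow> x = y"
  using pp permutes_inj injD by metis

lemma ins_a: "ins \<pi> a m n a = m" by (simp add: ins_def)
lemma ins_last: "ins \<pi> a m n (n - 1) = \<pi> a"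
proof -
  have "n - 1 \<noteq> a" using am mn by linarith
  then show ?thesis by (simp add: ins_def)
qed
lemma ins_mid: "m \<le> x \<Longrightarrow> x < n - 1 \<Longrightarrow> ins \<pi> a m n x = Suc x"
  using am by (simp add: ins_def)
lemma ins_other: "x < m \<Longrightarrow> x \<noteq> a \<Longrightarrow> ins \<pi> a m n x = \<pi> x"
proof -
  assume "x < m" "x \<noteq> a"
  moreover have "x \<noteq> n - 1" using \<open>x < m\<close> mn by linarith
  ultimately show ?thesis by (simp add: ins_def)
qed

lemma ins_permutes: "ins \<pi> a m n permutes {..<n}"
proof (rule bij_imp_permutes)
  let ?f = "ins \<pi> a m n"
  have pn: "\<pi> x < n" if "x < n" for x
    using pi_lt[of x] pi_ge[of x] mn that by (cases "x < m") auto
  have sub: "?f ` {..<n} \<subseteq> {..<n}"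
    using pn am mn by (auto simp: ins_def)
  have cs: "(x = a \<and> ?f x = m) \<or> (x \<noteq> a \<and> m \<le> x \<and> x < n - 1 \<and> ?f x = Suc x) \<or>
      (x = n - 1 \<and> ?f x = \<pi> a) \<or> (x \<noteq> a \<and> x < m \<and> ?f x = \<pi> x)" if "x < n" for x
    using that am mn by (auto simp: ins_def)
  have inj: "inj_on ?f {..<n}"
  proof (rule inj_onI)
    fix x y assume x: "x \<in> {..<n}" and y: "y \<in> {..<n}" and e: "?f x = ?f y"
    have a1: "\<pi> a < m" using pi_lt am by blast
    have xl: "x < n" and yl: "y < n" using x y by auto
    show "x = y"
      using cs[OF xl] cs[OF yl] e a1 pi_lt[of x] pi_lt[of y] pi_inj[of x y] pi_inj[of a y] pi_inj[of x a]
      by (elim disjE) auto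
  qed
  show "bij_betw ?f {..<n} {..<n}"
    using endo_inj_surj[OF _ sub inj] inj by (simp add: bij_betw_def)
  show "?f x = x" if "x \<notin> {..<n}" for x
    using that am mn pi_ge[of x] by (auto simp: ins_def)
qed

lemma ins_perm: "permutation (ins \<pi> a m n)"
  using ins_permutes perm_nat by blast

lemma O_sub: "Oa \<subseteq> {..<m}"
  unfolding Oa_def using po_sub[OF pp] am by auto

lemma a_in_O: "a \<in> Oa" unfolding Oa_def by (rule po_self)

lemma orbit_other:
  assumes "x \<notin> Oa" "x \<notin> Xs"
  shows "perm_orbit (ins \<pi> a m n) x = perm_orbit \<pi> x"
proof -
  have "\<forall>k. (ins \<pi> a m n ^^ k) x = (\<pi> ^^ k) x"
  proof
    fix k show "(ins \<pi> a m n ^^ k) x = (\<pi> ^^ k) x"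
    proof (induction k)
      case (Suc k)
      let ?y = "(\<pi> ^^ k) x"
      have yin: "?y \<in> perm_orbit \<pi> x" unfolding perm_orbit_def by blast
      have "?y \<noteq> a"
      proof
        assume "?y = a"
        then have "perm_orbit \<pi> a = perm_orbit \<pi> x" using po_eq[OF perm_nat[OF pp] yin] by simp
        then show False using assms(1) po_self[of x \<pi>] unfolding Oa_def by simp
      qed
      moreover have "?y \<notin> Xs"
      proof (cases "x < m")
        case True
        then have "?y \<in> {..<m}" using po_sub[OF pp, of x] yin by auto
        then show ?thesis by (auto simp: Xs_def)
      next
        case False
        then have "perm_orbit \<pi> x = {x}" using po_fix pi_ge by simp
        then show ?thesis using yin assms(2) by simp
      qed
      ultimately show ?case using Suc mn by (auto simp: ins_def Xs_def)
    qed simp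
  qed
  then show ?thesis unfolding perm_orbit_def by simp
qed

lemma ins_X: "k < n - m \<Longrightarrow> (ins \<pi> a m n ^^ Suc k) a = m + k"
proof (induction k)
  case 0 then show ?case by (simp add: ins_def)
next
  case (Suc k)
  let ?f = "ins \<pi> a m n"
  have "(?f ^^ Suc (Suc k)) a = ?f ((?f ^^ Suc k) a)" by (simp only: funpow.simps o_apply)
  also have "\<dots> = ?f (m + k)" using Suc by simp
  also have "\<dots> = m + Suc k"
  proof -
    have "m + k < n - 1" using Suc.prems by linarith
    then show ?thesis using am by (simp add: ins_def)
  qed
  finally show ?case .
qed

lemma orbit_a: "perm_orbit (ins \<pi> a m n) a = Oa \<union> Xs"
proof
  let ?f = "ins \<pi> a m n"
  show "perm_orbit ?f a \<subseteq> Oa \<union> Xs"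
  proof (rule po_closed)
    show "a \<in> Oa \<union> Xs" using a_in_O by simp
    fix y assume y: "y \<in> Oa \<union> Xs"
    show "?f y \<in> Oa \<union> Xs"
    proof (cases "y \<in> Xs")
      case True
      then have y1: "m \<le> y" "y < n" by (auto simp: Xs_def)
      have pa: "\<pi> a \<in> Oa" using po_step[OF po_self] unfolding Oa_def .
      show ?thesis
      proof (cases "y < n - 1")
        case True
        then have "?f y = Suc y" using y1 am by (simp add: ins_def)
        moreover have "Suc y < n" using True by linarith
        ultimately show ?thesis using y1 by (simp add: Xs_def)
      next
        case False
        then have "y = n - 1" using y1 by simp
        moreover have "n - 1 \<noteq> a" using am mn by linarith
        ultimately have "?f y = \<pi> a" by (simp add: ins_def)
        then show ?thesis using pa by simp
      qed
    next
      case False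
      then have yO: "y \<in> Oa" using y by simp
      then have ym: "y < m" using O_sub by auto
      show ?thesis
      proof (cases "y = a")
        case True
        then have "?f y = m" by (simp add: ins_def)
        then show ?thesis using mn by (simp add: Xs_def)
      next
        case False
        moreover have "y \<noteq> n - 1" using ym mn by linarith
        ultimately have "?f y = \<pi> y" using ym by (simp add: ins_def)
        moreover have "\<pi> y \<in> Oa" using po_step yO unfolding Oa_def by blast
        ultimately show ?thesis by simp
      qed
    qed
  qed
  have XX: "Xs \<subseteq> perm_orbit ?f a"
  proof
    fix x assume "x \<in> Xs"
    then have k: "x - m < n - m" "x = m + (x - m)" unfolding Xs_def by auto
    have "(?f ^^ Suc (x - m)) a = x" using ins_X[OF k(1)] k(2) by simp
    then show "x \<in> perm_orbit ?f a" using po_iter[of "Suc (x - m)" ?f a] by simp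
  qed
  have "(\<pi> ^^ k) a \<in> perm_orbit ?f a" for k
  proof (induction k)
    case 0 then show ?case by (simp add: po_self)
  next
    case (Suc k)
    show ?case
    proof (cases "(\<pi> ^^ k) a = a")
      case True
      have "n - 1 \<in> Xs" using mn by (auto simp: Xs_def)
      then have "?f (n - 1) \<in> perm_orbit ?f a" using XX po_step by blast
      then show ?thesis using True ins_last by simp
    next
      case False
      have "(\<pi> ^^ k) a \<in> Oa" unfolding Oa_def perm_orbit_def by blast
      then have "(\<pi> ^^ k) a < m" using O_sub by auto
      then have "?f ((\<pi> ^^ k) a) = (\<pi> ^^ Suc k) a" using False ins_other by simp
      then show ?thesis using po_step[OF Suc] by simp
    qed
  qed
  then have "Oa \<subseteq> perm_orbit ?f a" unfolding Oa_def perm_orbit_def by blast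
  then show "Oa \<union> Xs \<subseteq> perm_orbit ?f a" using XX by simp
qed

lemma orbit_OX: "y \<in> Oa \<union> Xs \<Longrightarrow> perm_orbit (ins \<pi> a m n) y = Oa \<union> Xs"
  using po_eq[OF ins_perm, of y a] orbit_a by simp

lemma cycles_ins: "perm_cycles (ins \<pi> a m n) n = insert (Oa \<union> Xs) (perm_cycles \<pi> m - {Oa})"
proof (rule set_eqI)
  fix c
  show "c \<in> perm_cycles (ins \<pi> a m n) n \<longleftrightarrow> c \<in> insert (Oa \<union> Xs) (perm_cycles \<pi> m - {Oa})"
  proof
    assume "c \<in> perm_cycles (ins \<pi> a m n) n"
    then obtain x where x: "x < n" "c = perm_orbit (ins \<pi> a m n) x" by (auto simp: perm_cycles_def)
    show "c \<in> insert (Oa \<union> Xs) (perm_cycles \<pi> m - {Oa})"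
    proof (cases "x \<in> Oa \<union> Xs")
      case True then show ?thesis using orbit_OX x by simp
    next
      case False
      then have "x < m" using x by (auto simp: Xs_def)
      moreover have "perm_orbit \<pi> x \<noteq> Oa" using False po_self[of x \<pi>] by auto
      ultimately show ?thesis using orbit_other False x by (auto simp: perm_cycles_def)
    qed
  next
    assume c: "c \<in> insert (Oa \<union> Xs) (perm_cycles \<pi> m - {Oa})"
    show "c \<in> perm_cycles (ins \<pi> a m n) n"
    proof (cases "c = Oa \<union> Xs")
      case True then show ?thesis using orbit_a am mn by (auto simp: perm_cycles_def)
    next
      case False
      then obtain x where x: "x < m" "c = perm_orbit \<pi> x" "c \<noteq> Oa" using c by (auto simp: perm_cycles_def)
      have "x \<notin> Oa"
      proof
        assume "x \<in> Oa"
        then show False using po_eq[OF perm_nat[OF pp], of x a] x by (simp add: Oa_def)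
      qed
      moreover have "x \<notin> Xs" using x by (auto simp: Xs_def)
      ultimately have "c = perm_orbit (ins \<pi> a m n) x" using orbit_other x by simp
      then show ?thesis using x mn unfolding perm_cycles_def by (intro image_eqI[of _ _ x]) auto
    qed
  qed
qed

lemma O_in: "Oa \<in> perm_cycles \<pi> m"
  using am by (auto simp: perm_cycles_def Oa_def)

lemma OX_notin: "Oa \<union> Xs \<notin> perm_cycles \<pi> m"
proof
  assume "Oa \<union> Xs \<in> perm_cycles \<pi> m"
  then obtain x where "x < m" "Oa \<union> Xs = perm_orbit \<pi> x" by (auto simp: perm_cycles_def)
  then have "Oa \<union> Xs \<subseteq> {..<m}" using po_sub[OF pp] by auto
  moreover have "m \<in> Xs" using mn by (simp add: Xs_def)
  ultimately show False by auto
qed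

lemma card_OX: "card (Oa \<union> Xs) = card Oa + (n - m)"
proof -
  have "finite Oa" using O_sub finite_subset by blast
  moreover have "Oa \<inter> Xs = {}" using O_sub by (auto simp: Xs_def)
  ultimately show ?thesis by (simp add: card_Un_disjoint Xs_def)
qed


lemma po_rtrancl: "y \<in> perm_orbit f x \<Longrightarrow> (x, y) \<in> ({(u, f u) | u. True} \<union> S)\<^sup>*"
proof -
  assume "y \<in> perm_orbit f x"
  then obtain k where "y = (f ^^ k) x" unfolding perm_orbit_def by auto
  moreover have "(x, (f ^^ k) x) \<in> ({(u, f u) | u. True} \<union> S)\<^sup>*" for k
  proof (induction k)
    case (Suc k)
    have "((f ^^ k) x, f ((f ^^ k) x)) \<in> ({(u, f u) | u. True} \<union> S)" by blast
    with Suc show ?case by (simp add: rtrancl.rtrancl_into_rtrancl)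
  qed simp
  ultimately show ?thesis by simp
qed

lemma trans_ins:
  assumes tr: "transitive_pair \<pi> \<alpha> m" and ap: "\<alpha> permutes {..<m}"
  shows "transitive_pair (ins \<pi> a m n) \<alpha> n"
proof -
  let ?f = "ins \<pi> a m n"
  define R where "R = {(u, \<pi> u) | u. True} \<union> {(u, \<alpha> u) | u. True}"
  define R' where "R' = {(u, ?f u) | u. True} \<union> {(u, \<alpha> u) | u. True}"
  have RR: "R \<subseteq> R'\<^sup>*"
  proof
    fix z assume "z \<in> R"
    then consider u where "z = (u, \<pi> u)" | u where "z = (u, \<alpha> u)" unfolding R_def by blast
    then show "z \<in> R'\<^sup>*"
    proof cases
      case (1 u)
      show ?thesis
      proof (cases "u = a")
        case True
        have "\<pi> a \<in> perm_orbit ?f a" using orbit_a po_step[OF po_self, of \<pi> a] by (auto simp: Oa_def)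
        then show ?thesis using 1 True po_rtrancl unfolding R'_def by blast
      next
        case False
        show ?thesis
        proof (cases "u < m")
          case True
          then have "?f u = \<pi> u" using False ins_other by simp
          moreover have "(u, ?f u) \<in> R'" unfolding R'_def by blast
          ultimately show ?thesis using 1 by auto
        next
          case False
          then show ?thesis using 1 pi_ge by simp
        qed
      qed
    next
      case (2 u)
      then show ?thesis unfolding R'_def by blast
    qed
  qed
  have RR': "R\<^sup>* \<subseteq> R'\<^sup>*"
    using rtrancl_mono[OF RR] by simp
  have toa: "(x, a) \<in> R'\<^sup>* \<and> (a, x) \<in> R'\<^sup>*" if "x < n" for x
  proof (cases "x < m")
    case True
    then have "(x, a) \<in> R\<^sup>*" "(a, x) \<in> R\<^sup>*" using tr am unfolding transitive_pair_def R_def by blast+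
    then show ?thesis using RR' by blast
  next
    case False
    then have "x \<in> Xs" using that by (simp add: Xs_def)
    then have "x \<in> perm_orbit ?f a" "a \<in> perm_orbit ?f x" using orbit_a orbit_OX po_self[of a ?f] by auto
    then show ?thesis using po_rtrancl unfolding R'_def by blast
  qed
  show ?thesis unfolding transitive_pair_def
  proof (intro allI impI)
    fix x y assume "x < n" "y < n"
    then have "(x, y) \<in> R'\<^sup>*" using toa[of x] toa[of y] by (meson rtrancl_trans)
    then show "(x, y) \<in> ({(u, ?f u) | u. True} \<union> {(u, \<alpha> u) | u. True})\<^sup>*" unfolding R'_def .
  qed
qed

end


lemma cycles_ext:
  assumes ap: "\<alpha> permutes {..<m}" and mn: "m \<le> n"
  shows "perm_cycles \<alpha> n = perm_cycles \<alpha> m \<union> (\<lambda>x. {x}) ` {m..<n}"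
proof -
  have "perm_orbit \<alpha> x = {x}" if "m \<le> x" for x
    using po_fix[of \<alpha> x] permutes_not_in[OF ap] that by auto
  moreover have "{..<n} = {..<m} \<union> {m..<n}" using mn by auto
  ultimately show ?thesis unfolding perm_cycles_def by (auto simp: image_Un)
qed

lemma card_cycles_ext:
  assumes ap: "\<alpha> permutes {..<m}" and mn: "m \<le> n"
  shows "card (perm_cycles \<alpha> n) = card (perm_cycles \<alpha> m) + (n - m)"
proof -
  have d: "perm_cycles \<alpha> m \<inter> (\<lambda>x. {x}) ` {m..<n} = {}"
  proof -
    have "c \<subseteq> {..<m}" if "c \<in> perm_cycles \<alpha> m" for c
      using that po_sub[OF ap] unfolding perm_cycles_def by auto
    then show ?thesis by fastforce
  qed
  have "card ((\<lambda>x. {x}) ` {m..<n}) = n - m"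
    by (subst card_image) (auto simp: inj_on_def)
  moreover have "finite (perm_cycles \<alpha> m)" unfolding perm_cycles_def by simp
  ultimately show ?thesis using cycles_ext[OF assms] d by (simp add: card_Un_disjoint)
qed

lemma cnt_insert:
  assumes "finite C" "O1 \<in> C" "Y \<notin> C"
  shows "card {c \<in> insert Y (C - {O1}). card c = j} + (if card O1 = j then 1 else 0)
       = card {c \<in> C. card c = j} + (if card Y = j then 1 else 0)"
proof -
  define S where "S = {c \<in> C. card c = j}"
  have f: "finite S" using assms(1) by (simp add: S_def)
  have Y: "Y \<notin> S - {O1}" using assms(3) by (simp add: S_def)
  have fD: "finite (S - {O1})" using f by simp
  have cD: "card (S - {O1}) + (if card O1 = j then 1 else 0) = card S"
  proof (cases "card O1 = j")
    case True
    then have o: "O1 \<in> S" using assms by (simp add: S_def)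
    then have "card S > 0" using f card_gt_0_iff by blast
    then show ?thesis using o f True by (simp add: card_Diff_singleton)
  next
    case False
    then have "S - {O1} = S" by (auto simp: S_def)
    then show ?thesis using False by simp
  qed
  have e: "{c \<in> insert Y (C - {O1}). card c = j} = (if card Y = j then insert Y (S - {O1}) else S - {O1})"
    by (auto simp: S_def)
  have "card {c \<in> insert Y (C - {O1}). card c = j} = card (S - {O1}) + (if card Y = j then 1 else 0)"
    unfolding e using card_insert_disjoint[OF fD Y] by simp
  then show ?thesis using cD unfolding S_def by linarith
qed

lemma card_insert_swap:
  assumes "finite C" "O1 \<in> C" "Y \<notin> C"
  shows "card (insert Y (C - {O1})) = card C"
proof -
  have "card C > 0" using assms card_gt_0_iff by blast
  then show ?thesis using assms by (simp add: card_insert_disjoint card_Diff_singleton)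
qed

definition cj :: "(nat \<Rightarrow> nat) \<Rightarrow> (nat \<Rightarrow> nat) \<Rightarrow> nat \<Rightarrow> nat" where
  "cj \<pi> \<sigma> = \<pi> \<circ> \<sigma> \<circ> inv \<pi>"

lemma cj_permutes: "\<pi> permutes S \<Longrightarrow> \<sigma> permutes S \<Longrightarrow> cj \<pi> \<sigma> permutes S"
  unfolding cj_def by (intro permutes_compose permutes_inv) auto

lemma cj_comp: "\<pi> permutes S \<Longrightarrow> cj \<pi> \<sigma> \<circ> cj \<pi> \<alpha> = cj \<pi> (\<sigma> \<circ> \<alpha>)"
  unfolding cj_def using permutes_inv_o(2)[of \<pi> S] by (simp add: fun_eq_iff)

lemma cj_funpow:
  assumes pp: "\<pi> permutes S"
  shows "cj \<pi> \<sigma> ^^ k = cj \<pi> (\<sigma> ^^ k)"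
proof (induction k)
  case 0 then show ?case using permutes_inverses(1)[OF pp] by (simp add: cj_def fun_eq_iff)
next
  case (Suc k)
  have "cj \<pi> \<sigma> ^^ Suc k = cj \<pi> \<sigma> \<circ> (cj \<pi> \<sigma> ^^ k)" by simp
  also have "\<dots> = cj \<pi> \<sigma> \<circ> cj \<pi> (\<sigma> ^^ k)" using Suc by simp
  also have "\<dots> = cj \<pi> (\<sigma> \<circ> \<sigma> ^^ k)" using cj_comp[OF pp] by simp
  also have "\<sigma> \<circ> \<sigma> ^^ k = \<sigma> ^^ Suc k" by simp
  finally show ?case .
qed

lemma cj_apply: "cj \<pi> \<sigma> x = \<pi> (\<sigma> (inv \<pi> x))" by (simp add: cj_def)

lemma cj_orbit:
  assumes pp: "\<pi> permutes S"
  shows "perm_orbit (cj \<pi> \<sigma>) x = \<pi> ` perm_orbit \<sigma> (inv \<pi> x)"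
  unfolding perm_orbit_def cj_funpow[OF pp] by (auto simp: cj_apply)

lemma cj_cycles:
  assumes "\<pi> permutes {..<n}"
  shows "perm_cycles (cj \<pi> \<sigma>) n = (\<lambda>c. \<pi> ` c) ` perm_cycles \<sigma> n"
proof -
  have "inv \<pi> ` {..<n} = {..<n}" using permutes_image[OF permutes_inv[OF assms]] .
  then show ?thesis unfolding perm_cycles_def using cj_orbit[OF assms, of \<sigma>]
    by (simp add: image_image) (metis image_image)
qed

lemma inj_img: "\<pi> permutes S \<Longrightarrow> inj (\<lambda>c. \<pi> ` c)"
  by (meson inj_image_eq_iff injI permutes_inj)

lemma cj_card_cycles:
  assumes "\<pi> permutes {..<n}"
  shows "card (perm_cycles (cj \<pi> \<sigma>) n) = card (perm_cycles \<sigma> n)"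
  using cj_cycles[OF assms] inj_img[OF assms] by (simp add: card_image inj_on_subset)

lemma cj_cnt:
  assumes "\<pi> permutes {..<n}"
  shows "card {c \<in> perm_cycles (cj \<pi> \<sigma>) n. card c = j} = card {c \<in> perm_cycles \<sigma> n. card c = j}"
proof -
  have ci: "card (\<pi> ` c) = card c" for c
    using permutes_inj[OF assms] by (simp add: card_image inj_on_subset)
  have "{c \<in> perm_cycles (cj \<pi> \<sigma>) n. card c = j} = (\<lambda>c. \<pi> ` c) ` {c \<in> perm_cycles \<sigma> n. card c = j}"
    using cj_cycles[OF assms] ci by auto
  then show ?thesis using inj_img[OF assms] by (simp add: card_image inj_on_subset)
qed

lemma cj_trans:
  assumes pp: "\<pi> permutes {..<n}" and tr: "transitive_pair \<sigma> \<alpha> n"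
  shows "transitive_pair (cj \<pi> \<sigma>) (cj \<pi> \<alpha>) n"
proof -
  define R where "R = {(u, \<sigma> u) | u. True} \<union> {(u, \<alpha> u) | u. True}"
  define R' where "R' = {(u, cj \<pi> \<sigma> u) | u. True} \<union> {(u, cj \<pi> \<alpha> u) | u. True}"
  have step: "(\<pi> x, \<pi> y) \<in> R'" if "(x, y) \<in> R" for x y
  proof -
    have "cj \<pi> \<sigma> (\<pi> x) = \<pi> (\<sigma> x)" "cj \<pi> \<alpha> (\<pi> x) = \<pi> (\<alpha> x)"
      using permutes_inverses(2)[OF pp] by (auto simp: cj_apply)
    then show ?thesis using that unfolding R_def R'_def by auto
  qed
  have st: "(\<pi> x, \<pi> y) \<in> R'\<^sup>*" if "(x, y) \<in> R\<^sup>*" for x y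
    using that
  proof (induction rule: rtrancl_induct)
    case (step y z)
    then show ?case using step(3) \<open>(y, z) \<in> R\<close> by (meson rtrancl.rtrancl_into_rtrancl step.hyps(2) \<open>\<And>x y. (x, y) \<in> R \<Longrightarrow> (\<pi> x, \<pi> y) \<in> R'\<close>)
  qed simp
  show ?thesis unfolding transitive_pair_def
  proof (intro allI impI)
    fix x y assume x: "x < n" and y: "y < n"
    have "inv \<pi> x < n" "inv \<pi> y < n"
      using permutes_in_image[OF permutes_inv[OF pp]] x y by auto
    then have "(inv \<pi> x, inv \<pi> y) \<in> R\<^sup>*" using tr unfolding transitive_pair_def R_def by blast
    then have "(x, y) \<in> R'\<^sup>*" using st permutes_inverses(1)[OF pp] by metis
    then show "(x, y) \<in> ({(u, cj \<pi> \<sigma> u) | u. True} \<union> {(u, cj \<pi> \<alpha> u) | u. True})\<^sup>*"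
      unfolding R'_def .
  qed
qed

lemma cj_lbm:
  assumes pp: "\<pi> permutes {..<n}" and M: "(\<sigma>, \<alpha>) \<in> labelled_bip_maps g h n"
  shows "(cj \<pi> \<sigma>, cj \<pi> \<alpha>) \<in> labelled_bip_maps g h n"
proof -
  have c: "cj \<pi> \<sigma> \<circ> cj \<pi> \<alpha> = cj \<pi> (\<sigma> \<circ> \<alpha>)" using cj_comp[OF pp] .
  from M have m1: "\<sigma> permutes {..<n}" "\<alpha> permutes {..<n}" "transitive_pair \<sigma> \<alpha> n"
    and m2: "\<forall>j\<ge>1. card {c \<in> perm_cycles (\<sigma> \<circ> \<alpha>) n. card c = j} = h j"
    and m3: "int (card (perm_cycles \<sigma> n)) + int (card (perm_cycles \<alpha> n)) - int n
        + int (card (perm_cycles (\<sigma> \<circ> \<alpha>) n)) = 2 - 2 * int g"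
    unfolding labelled_bip_maps_def by auto
  have "cj \<pi> \<sigma> permutes {..<n}" "cj \<pi> \<alpha> permutes {..<n}" "transitive_pair (cj \<pi> \<sigma>) (cj \<pi> \<alpha>) n"
    using m1 cj_permutes[OF pp] cj_trans[OF pp] by auto
  moreover have "\<forall>j\<ge>1. card {c \<in> perm_cycles (cj \<pi> \<sigma> \<circ> cj \<pi> \<alpha>) n. card c = j} = h j"
    unfolding c cj_cnt[OF pp] using m2 .
  moreover have "int (card (perm_cycles (cj \<pi> \<sigma>) n)) + int (card (perm_cycles (cj \<pi> \<alpha>) n)) - int n
        + int (card (perm_cycles (cj \<pi> \<sigma> \<circ> cj \<pi> \<alpha>) n)) = 2 - 2 * int g"
    unfolding c cj_card_cycles[OF pp] using m3 .
  ultimately show ?thesis unfolding labelled_bip_maps_def by auto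
qed

lemma cj_cj:
  assumes "\<tau>1 permutes S" "\<tau>2 permutes S"
  shows "cj \<tau>1 (cj \<tau>2 \<sigma>) = cj (\<tau>1 \<circ> \<tau>2) \<sigma>"
proof -
  have "inv (\<tau>1 \<circ> \<tau>2) = inv \<tau>2 \<circ> inv \<tau>1"
    using assms by (simp add: o_inv_distrib permutes_bij)
  then show ?thesis by (simp add: cj_def o_assoc)
qed

lemma cj_id: "cj id \<sigma> = \<sigma>" by (simp add: cj_def)

lemma cj_inv_cancel:
  assumes "\<pi> permutes S"
  shows "cj (inv \<pi>) (cj \<pi> \<sigma>) = \<sigma>"
proof -
  have "cj (inv \<pi>) (cj \<pi> \<sigma>) = cj (inv \<pi> \<circ> \<pi>) \<sigma>"
    using cj_cj[OF permutes_inv[OF assms] assms] .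
  also have "inv \<pi> \<circ> \<pi> = id" using permutes_inv_o(2)[OF assms] .
  finally show ?thesis using cj_id[of \<sigma>] by (simp add: id_def)
qed

lemma cj_fix_comm:
  assumes "\<pi> permutes S" "cj \<pi> \<sigma> = \<sigma>"
  shows "\<pi> (\<sigma> x) = \<sigma> (\<pi> x)"
proof -
  have "cj \<pi> \<sigma> (\<pi> x) = \<pi> (\<sigma> x)" using permutes_inverses(2)[OF assms(1)] by (simp add: cj_apply)
  then show ?thesis using assms(2) by simp
qed

lemma free_action:
  assumes tp: "\<tau> permutes {..<n}" and t0: "\<tau> 0 = 0" and n0: "0 < n"
    and cs: "cj \<tau> \<sigma> = \<sigma>" and ca: "cj \<tau> \<alpha> = \<alpha>" and tr: "transitive_pair \<sigma> \<alpha> n"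
  shows "\<tau> = id"
proof -
  define R where "R = {(u, \<sigma> u) | u. True} \<union> {(u, \<alpha> u) | u. True}"
  have "\<tau> y = y" if "(0, y) \<in> R\<^sup>*" for y
    using that
  proof (induction rule: rtrancl_induct)
    case base then show ?case using t0 .
  next
    case (step y z)
    from step(2) have "z = \<sigma> y \<or> z = \<alpha> y" unfolding R_def by blast
    then show ?case using cj_fix_comm[OF tp cs, of y] cj_fix_comm[OF tp ca, of y] step(3) by auto
  qed
  moreover have "(0, y) \<in> R\<^sup>*" if "y < n" for y using tr n0 that unfolding transitive_pair_def R_def by blast
  moreover have "\<tau> y = y" if "\<not> y < n" for y using permutes_not_in[OF tp] that by auto
  ultimately show ?thesis by (auto simp: fun_eq_iff)
qed

definition stab0 :: "nat \<Rightarrow> (nat \<Rightarrow> nat) set" where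
  "stab0 n = {\<tau>. \<tau> permutes {..<n} \<and> \<tau> 0 = 0}"

lemma card_stab0:
  assumes "0 < n" shows "card (stab0 n) = fact (n - 1)"
proof -
  have "stab0 n = {\<tau>. \<tau> permutes {1..<n}}"
  proof (rule set_eqI, rule iffI)
    fix \<tau> assume "\<tau> \<in> stab0 n"
    then have "\<tau> permutes {..<n}" "\<tau> 0 = 0" by (auto simp: stab0_def)
    moreover have "\<And>x. x \<in> {..<n} - {1..<n} \<Longrightarrow> \<tau> x = x"
    proof -
      fix x assume "x \<in> {..<n} - {1..<n}"
      then have "x = 0" by auto
      then show "\<tau> x = x" using \<open>\<tau> 0 = 0\<close> by simp
    qed
    ultimately have "\<tau> permutes {1..<n}" using permutes_superset[of \<tau> "{..<n}" "{1..<n}"] by blast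
    then show "\<tau> \<in> {\<tau>. \<tau> permutes {1..<n}}" by simp
  next
    fix \<tau> assume "\<tau> \<in> {\<tau>. \<tau> permutes {1..<n}}"
    then have p: "\<tau> permutes {1..<n}" by simp
    then have "\<tau> permutes {..<n}" by (rule permutes_subset) auto
    moreover have "\<tau> 0 = 0" using permutes_not_in[OF p] by auto
    ultimately show "\<tau> \<in> stab0 n" by (simp add: stab0_def)
  qed
  moreover have "card {1..<n} = n - 1" by simp
  ultimately show ?thesis using card_permutations[of "{1..<n}" "n - 1"] by simp
qed

definition act :: "(nat \<Rightarrow> nat) \<Rightarrow> (nat \<Rightarrow> nat) \<times> (nat \<Rightarrow> nat) \<Rightarrow> (nat \<Rightarrow> nat) \<times> (nat \<Rightarrow> nat)" where
  "act \<tau> M = (cj \<tau> (fst M), cj \<tau> (snd M))"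

lemma act_act: "\<tau>1 permutes S \<Longrightarrow> \<tau>2 permutes S \<Longrightarrow> act \<tau>1 (act \<tau>2 M) = act (\<tau>1 \<circ> \<tau>2) M"
  by (simp add: act_def cj_cj)

lemma act_lbm: "\<pi> permutes {..<n} \<Longrightarrow> M \<in> labelled_bip_maps g h n \<Longrightarrow> act \<pi> M \<in> labelled_bip_maps g h n"
  using cj_lbm[of \<pi> n "fst M" "snd M" g h] by (simp add: act_def)

lemma finite_lbm: "finite (labelled_bip_maps g h n)"
proof -
  have "labelled_bip_maps g h n \<subseteq> {p. p permutes {..<n}} \<times> {p. p permutes {..<n}}"
    unfolding labelled_bip_maps_def by auto
  then show ?thesis using finite_permutations[of "{..<n}"] by (meson finite_SigmaI finite_lessThan finite_subset)
qed

lemma stab0_inv: "\<tau> \<in> stab0 n \<Longrightarrow> inv \<tau> \<in> stab0 n"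
  unfolding stab0_def using permutes_inv permutes_inv_eq by fastforce

lemma stab0_comp: "\<tau>1 \<in> stab0 n \<Longrightarrow> \<tau>2 \<in> stab0 n \<Longrightarrow> \<tau>1 \<circ> \<tau>2 \<in> stab0 n"
  unfolding stab0_def by (auto intro: permutes_compose)

lemma dvd_lbm:
  assumes n0: "0 < n"
  shows "fact (n - 1) dvd card (labelled_bip_maps g h n)"
proof -
  let ?L = "labelled_bip_maps g h n"
  let ?G = "stab0 n"
  define orb where "orb M = (\<lambda>\<tau>. act \<tau> M) ` ?G" for M
  let ?C = "orb ` ?L"
  have Gp: "\<tau> permutes {..<n}" if "\<tau> \<in> ?G" for \<tau> using that by (simp add: stab0_def)
  have idG: "id \<in> ?G" by (simp add: stab0_def permutes_id)
  have orbL: "orb M \<subseteq> ?L" if "M \<in> ?L" for M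
    using that act_lbm Gp unfolding orb_def by blast
  have Min: "M \<in> orb M" for M
    using idG unfolding orb_def by (rule rev_image_eqI) (simp add: act_def cj_id)
  have U: "\<Union>?C = ?L" using orbL Min by blast
  have cardorb: "card (orb M) = card ?G" if "M \<in> ?L" for M
  proof -
    have "inj_on (\<lambda>\<tau>. act \<tau> M) ?G"
    proof (rule inj_onI)
      fix \<tau>1 \<tau>2 assume t1: "\<tau>1 \<in> ?G" and t2: "\<tau>2 \<in> ?G" and e: "act \<tau>1 M = act \<tau>2 M"
      let ?\<rho> = "inv \<tau>2 \<circ> \<tau>1"
      have rG: "?\<rho> \<in> ?G" using stab0_comp[OF stab0_inv[OF t2] t1] .
      have "act ?\<rho> M = act (inv \<tau>2) (act \<tau>1 M)" using act_act[OF Gp[OF stab0_inv[OF t2]] Gp[OF t1]] by simp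
      also have "\<dots> = act (inv \<tau>2) (act \<tau>2 M)" using e by simp
      also have "\<dots> = M" by (simp add: act_def cj_inv_cancel[OF Gp[OF t2]])
      finally have fx: "act ?\<rho> M = M" .
      obtain \<sigma> \<alpha> where M: "M = (\<sigma>, \<alpha>)" by fastforce
      have tr: "transitive_pair \<sigma> \<alpha> n" using that M unfolding labelled_bip_maps_def by auto
      have "?\<rho> = id"
        using free_action[of ?\<rho> n \<sigma> \<alpha>] rG n0 fx tr M by (simp add: stab0_def act_def)
      then have "\<tau>2 \<circ> (inv \<tau>2 \<circ> \<tau>1) = \<tau>2" by simp
      then show "\<tau>1 = \<tau>2" using permutes_inv_o(1)[OF Gp[OF t2]] by (simp add: o_assoc)
    qed
    then show ?thesis unfolding orb_def by (rule card_image)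
  qed
  have disj: "orb M1 \<inter> orb M2 = {}" if "M1 \<in> ?L" "M2 \<in> ?L" "orb M1 \<noteq> orb M2" for M1 M2
  proof (rule ccontr)
    assume "orb M1 \<inter> orb M2 \<noteq> {}"
    then obtain Z where Z1: "Z \<in> orb M1" and Z2: "Z \<in> orb M2" by blast
    have key: "orb M = orb Z" if Zin: "Z \<in> orb M" for M
    proof -
      obtain \<tau> where t: "\<tau> \<in> ?G" and Zt: "Z = act \<tau> M" using Zin unfolding orb_def by blast
      show ?thesis
      proof
        show "orb M \<subseteq> orb Z"
        proof
          fix W assume "W \<in> orb M"
          then obtain \<tau>' where t': "\<tau>' \<in> ?G" and W: "W = act \<tau>' M" unfolding orb_def by blast
          have "act (\<tau>' \<circ> inv \<tau>) Z = act \<tau>' (act (inv \<tau>) (act \<tau> M))"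
            using Zt act_act[OF Gp[OF t'] Gp[OF stab0_inv[OF t]]] by simp
          also have "\<dots> = W" using W by (simp add: act_def cj_inv_cancel[OF Gp[OF t]])
          finally show "W \<in> orb Z" unfolding orb_def
            using stab0_comp[OF t' stab0_inv[OF t]] by (metis image_eqI)
        qed
        show "orb Z \<subseteq> orb M"
        proof
          fix W assume "W \<in> orb Z"
          then obtain \<tau>' where t': "\<tau>' \<in> ?G" and W: "W = act \<tau>' Z" unfolding orb_def by blast
          have "W = act (\<tau>' \<circ> \<tau>) M" using W Zt act_act[OF Gp[OF t'] Gp[OF t]] by simp
          then show "W \<in> orb M" unfolding orb_def using stab0_comp[OF t' t] by blast
        qed
      qed
    qed
    from key[OF Z1] key[OF Z2] that(3) show False by simp
  qed
  have "card ?G * card ?C = card (\<Union>?C)"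
  proof (rule card_partition)
    show "finite ?C" using finite_lbm by simp
    show "finite (\<Union>?C)" using U finite_lbm by simp
    show "\<And>c. c \<in> ?C \<Longrightarrow> card c = card ?G" using cardorb by blast
    show "\<And>c1 c2. c1 \<in> ?C \<Longrightarrow> c2 \<in> ?C \<Longrightarrow> c1 \<noteq> c2 \<Longrightarrow> c1 \<inter> c2 = {}" using disj by blast
  qed
  then have "card ?L = fact (n - 1) * card ?C" using U card_stab0[OF n0] by simp
  then show ?thesis by simp
qed

lemma ins_mid_g: "a < m \<Longrightarrow> m \<le> x \<Longrightarrow> x < n - 1 \<Longrightarrow> ins \<pi> a m n x = Suc x"
  by (simp add: ins_def)

lemma act_cancel: "\<pi> permutes S \<Longrightarrow> act (inv \<pi>) (act \<pi> M) = M"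
  by (simp add: act_def cj_inv_cancel)

lemma fiber_le:
  assumes "finite D" "F ` D \<subseteq> E" "finite E" "\<And>e. e \<in> E \<Longrightarrow> card {d \<in> D. F d = e} \<le> k"
  shows "card D \<le> k * card E"
proof -
  have "D = (\<Union>e\<in>E. {d \<in> D. F d = e})" using assms(2) by auto
  then have "card D \<le> (\<Sum>e\<in>E. card {d \<in> D. F d = e})" by (metis card_UN_le assms(3))
  also have "\<dots> \<le> (\<Sum>e\<in>E. k)" using assms(4) by (meson sum_mono)
  finally show ?thesis by (simp add: mult.commute)
qed

lemma fix_tail:
  assumes rp: "\<rho> permutes {..<n}" and rl: "\<rho> (n - 1) = n - 1"
    and comm: "\<And>x. \<rho> (\<sigma>1 x) = \<sigma>2 (\<rho> x)"
    and s1: "\<And>k. m \<le> k \<Longrightarrow> k < n - 1 \<Longrightarrow> \<sigma>1 k = Suc k"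
    and s2: "\<And>k. m \<le> k \<Longrightarrow> k < n - 1 \<Longrightarrow> \<sigma>2 k = Suc k"
    and i2: "inj \<sigma>2" and mn: "m < n"
  shows "\<rho> permutes {..<m}"
proof -
  have AL: "\<forall>i. i < n - m \<longrightarrow> \<rho> (n - 1 - i) = n - 1 - i"
  proof (intro allI)
    fix i show "i < n - m \<longrightarrow> \<rho> (n - 1 - i) = n - 1 - i"
    proof (induction i)
      case 0 then show ?case using rl by simp
    next
      case (Suc i)
      show ?case
      proof
        assume a: "Suc i < n - m"
        define k where "k = n - 1 - Suc i"
        have k1: "m \<le> k" "k < n - 1" and k2: "Suc k = n - 1 - i" using a mn by (auto simp: k_def)
        have "\<rho> (Suc k) = Suc k" using Suc a k2 by simp
        then have "\<sigma>2 (\<rho> k) = Suc k" using comm[of k] s1[OF k1] by simp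
        also have "Suc k = \<sigma>2 k" using s2[OF k1] by simp
        finally have "\<rho> k = k" using i2 by (simp add: inj_eq)
        then show "\<rho> (n - 1 - Suc i) = n - 1 - Suc i" by (simp add: k_def)
      qed
    qed
  qed
  have fx: "\<rho> k = k" if "m \<le> k" "k < n" for k
  proof -
    have i: "n - 1 - k < n - m" using that by linarith
    have "n - 1 - (n - 1 - k) = k" using that by linarith
    then show ?thesis using AL i by metis
  qed
  show ?thesis
    by (rule permutes_superset[OF rp]) (use fx in auto)
qed

locale mainl =
  fixes g m n j0 p :: nat and hA hB :: "nat \<Rightarrow> nat"
  assumes m1: "1 \<le> m" and mn: "m < n" and pj: "p = j0 + (n - m)" and j1: "1 \<le> j0"
    and hh: "\<And>j. hB j + (if j = j0 then 1 else 0) = hA j + (if j = p then 1 else 0)"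
begin

abbreviation "A \<equiv> labelled_bip_maps g hA m"
abbreviation "B \<equiv> labelled_bip_maps g hB n"

definition corners where
  "corners M = {u. u < m \<and> card (perm_orbit (fst M \<circ> snd M) u) = j0}"

definition Phi where
  "Phi M u = (ins (fst M) (snd M u) m n, snd M)"

lemma A_facts:
  assumes "(\<sigma>, \<alpha>) \<in> A"
  shows "\<sigma> permutes {..<m}" "\<alpha> permutes {..<m}" "transitive_pair \<sigma> \<alpha> m"
    "\<And>j. j \<ge> 1 \<Longrightarrow> card {c \<in> perm_cycles (\<sigma> \<circ> \<alpha>) m. card c = j} = hA j"
    "int (card (perm_cycles \<sigma> m)) + int (card (perm_cycles \<alpha> m)) - int m
        + int (card (perm_cycles (\<sigma> \<circ> \<alpha>) m)) = 2 - 2 * int g"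
  using assms unfolding labelled_bip_maps_def by auto

lemma comp_ins:
  assumes sp: "\<sigma> permutes {..<m}" and ap: "\<alpha> permutes {..<m}" and u: "u < m"
  shows "ins \<sigma> (\<alpha> u) m n \<circ> \<alpha> = ins (\<sigma> \<circ> \<alpha>) u m n"
proof
  fix x
  have am: "\<alpha> u < m" using u ap permutes_in_image by fastforce
  show "(ins \<sigma> (\<alpha> u) m n \<circ> \<alpha>) x = ins (\<sigma> \<circ> \<alpha>) u m n x"
  proof (cases "x = u")
    case True then show ?thesis by (simp add: ins_def)
  next
    case False
    then have ne: "\<alpha> x \<noteq> \<alpha> u" using permutes_inj[OF ap] by (meson injD)
    show ?thesis
    proof (cases "x < m")
      case True
      then have "\<alpha> x < m" using ap permutes_in_image by fastforce
      moreover have "x \<noteq> n - 1" "\<alpha> x \<noteq> n - 1" using True \<open>\<alpha> x < m\<close> mn by linarith+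
      ultimately show ?thesis using ne False True by (simp add: ins_def)
    next
      case False
      then have ax: "\<alpha> x = x" using permutes_not_in[OF ap] by auto
      have "x \<noteq> u" "x \<noteq> \<alpha> u" using False u am by auto
      moreover have "\<sigma> x = x" using permutes_not_in[OF sp] False by auto
      ultimately show ?thesis using ax by (simp add: ins_def)
    qed
  qed
qed

lemma Phi_in:
  assumes M: "M \<in> A" and u: "u \<in> corners M"
  shows "Phi M u \<in> B"
proof -
  obtain \<sigma> \<alpha> where Me: "M = (\<sigma>, \<alpha>)" by fastforce
  note F = A_facts[OF M[unfolded Me]]
  have um: "u < m" and cu: "card (perm_orbit (\<sigma> \<circ> \<alpha>) u) = j0" using u by (auto simp: corners_def Me)
  have am: "\<alpha> u < m" using um F(2) permutes_in_image by fastforce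
  have sap: "\<sigma> \<circ> \<alpha> permutes {..<m}" using permutes_compose[OF F(2) F(1)] .
  interpret I1: insl \<sigma> "\<alpha> u" m n using F(1) am mn by unfold_locales
  interpret I2: insl "\<sigma> \<circ> \<alpha>" u m n using sap um mn by unfold_locales
  let ?s = "ins \<sigma> (\<alpha> u) m n"
  have ci: "?s \<circ> \<alpha> = ins (\<sigma> \<circ> \<alpha>) u m n" using comp_ins[OF F(1) F(2) um] .
  have apn: "\<alpha> permutes {..<n}" using F(2) by (rule permutes_subset) (use mn in auto)
  have fin: "finite (perm_cycles \<tau> k)" for \<tau> k by (simp add: perm_cycles_def)
  have faces: "card {c \<in> perm_cycles (?s \<circ> \<alpha>) n. card c = j} = hB j" if "j \<ge> 1" for j
  proof -
    have "card {c \<in> perm_cycles (?s \<circ> \<alpha>) n. card c = j} + (if card I2.Oa = j then 1 else 0)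
        = card {c \<in> perm_cycles (\<sigma> \<circ> \<alpha>) m. card c = j} + (if card (I2.Oa \<union> I2.Xs) = j then 1 else 0)"
      unfolding ci I2.cycles_ins by (rule cnt_insert[OF fin I2.O_in I2.OX_notin])
    moreover have "card I2.Oa = j0" using cu by (simp add: I2.Oa_def)
    moreover have "card (I2.Oa \<union> I2.Xs) = p" using I2.card_OX cu pj by (simp add: I2.Oa_def)
    moreover have "card {c \<in> perm_cycles (\<sigma> \<circ> \<alpha>) m. card c = j} = hA j" using F(4) that by simp
    ultimately have X: "card {c \<in> perm_cycles (?s \<circ> \<alpha>) n. card c = j} + (if j0 = j then 1 else 0)
        = hA j + (if p = j then 1 else 0)" by simp
    have jp: "j0 \<noteq> p" using pj mn by simp
    show ?thesis
    proof (cases "j = j0")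
      case True
      then have "j \<noteq> p" using jp by simp
      then show ?thesis using X hh[of j] True by simp
    next
      case False
      then show ?thesis using X hh[of j] by (cases "j = p") simp_all
    qed
  qed
  have e1: "card (perm_cycles ?s n) = card (perm_cycles \<sigma> m)"
    unfolding I1.cycles_ins by (rule card_insert_swap[OF fin I1.O_in I1.OX_notin])
  have e2: "card (perm_cycles (?s \<circ> \<alpha>) n) = card (perm_cycles (\<sigma> \<circ> \<alpha>) m)"
    unfolding ci I2.cycles_ins by (rule card_insert_swap[OF fin I2.O_in I2.OX_notin])
  have e3: "card (perm_cycles \<alpha> n) = card (perm_cycles \<alpha> m) + (n - m)"
    by (rule card_cycles_ext[OF F(2) less_imp_le[OF mn]])
  have euler: "int (card (perm_cycles ?s n)) + int (card (perm_cycles \<alpha> n)) - int n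
        + int (card (perm_cycles (?s \<circ> \<alpha>) n)) = 2 - 2 * int g"
  proof -
    have "int (n - m) = int n - int m" using mn by simp
    then show ?thesis unfolding e1 e2 e3 of_nat_add using F(5) by linarith
  qed
  have "(?s, \<alpha>) \<in> B"
    unfolding labelled_bip_maps_def mem_Collect_eq case_prod_conv
    using I1.ins_permutes apn I1.trans_ins[OF F(3) F(2)] faces euler by blast
  then show ?thesis by (simp add: Phi_def Me)
qed

lemma Phi_inj:
  assumes M1: "M1 \<in> A" and u1: "u1 \<in> corners M1" and M2: "M2 \<in> A" and u2: "u2 \<in> corners M2"
    and e: "Phi M1 u1 = Phi M2 u2"
  shows "M1 = M2 \<and> u1 = u2"
proof -
  obtain \<sigma>1 \<alpha>1 where Me1: "M1 = (\<sigma>1, \<alpha>1)" by fastforce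
  obtain \<sigma>2 \<alpha>2 where Me2: "M2 = (\<sigma>2, \<alpha>2)" by fastforce
  note F1 = A_facts[OF M1[unfolded Me1]] and F2 = A_facts[OF M2[unfolded Me2]]
  have um1: "u1 < m" and um2: "u2 < m" using u1 u2 by (auto simp: corners_def)
  have aa: "\<alpha>1 = \<alpha>2" and ss: "ins \<sigma>1 (\<alpha>1 u1) m n = ins \<sigma>2 (\<alpha>1 u2) m n"
    using e by (auto simp: Phi_def Me1 Me2)
  have am1: "\<alpha>1 u1 < m" and am2: "\<alpha>1 u2 < m" using um1 um2 F1(2) permutes_in_image by fastforce+
  interpret I1: insl \<sigma>1 "\<alpha>1 u1" m n using F1(1) am1 mn by unfold_locales
  interpret I2: insl \<sigma>2 "\<alpha>1 u2" m n using F2(1) am2 mn by unfold_locales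
  have "\<alpha>1 u1 = \<alpha>1 u2"
  proof (rule ccontr)
    assume ne: "\<alpha>1 u1 \<noteq> \<alpha>1 u2"
    have "ins \<sigma>2 (\<alpha>1 u2) m n (\<alpha>1 u1) = \<sigma>2 (\<alpha>1 u1)" using I2.ins_other[OF am1 ne] .
    moreover have "\<sigma>2 (\<alpha>1 u1) < m" using I2.pi_lt am1 by blast
    moreover have "ins \<sigma>1 (\<alpha>1 u1) m n (\<alpha>1 u1) = m" using I1.ins_a .
    ultimately show False using ss by simp
  qed
  then have uu: "u1 = u2" using permutes_inj[OF F1(2)] by (meson injD)
  have "\<sigma>1 x = \<sigma>2 x" for x
  proof (cases "x < m")
    case True
    show ?thesis
    proof (cases "x = \<alpha>1 u1")
      case True
      then show ?thesis using I1.ins_last I2.ins_last ss uu by metis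
    next
      case False
      then show ?thesis using I1.ins_other[OF \<open>x < m\<close> False] I2.ins_other[of x] \<open>x < m\<close> ss uu by (metis fun_cong)
    qed
  next
    case False
    then show ?thesis using I1.pi_ge I2.pi_ge by simp
  qed
  then show ?thesis using aa uu Me1 Me2 by auto
qed

lemma card_corners:
  assumes M: "M \<in> A"
  shows "card (corners M) = j0 * hA j0"
proof -
  obtain \<sigma> \<alpha> where Me: "M = (\<sigma>, \<alpha>)" by fastforce
  note F = A_facts[OF M[unfolded Me]]
  have sap: "\<sigma> \<circ> \<alpha> permutes {..<m}" using permutes_compose[OF F(2) F(1)] .
  have perm: "permutation (\<sigma> \<circ> \<alpha>)" using perm_nat[OF sap] .
  define C where "C = {c \<in> perm_cycles (\<sigma> \<circ> \<alpha>) m. card c = j0}"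
  have U: "\<Union>C = corners M"
  proof
    show "\<Union>C \<subseteq> corners M"
    proof
      fix u assume "u \<in> \<Union>C"
      then obtain x where x: "x < m" "u \<in> perm_orbit (\<sigma> \<circ> \<alpha>) x" "card (perm_orbit (\<sigma> \<circ> \<alpha>) x) = j0"
        unfolding C_def perm_cycles_def by auto
      have "perm_orbit (\<sigma> \<circ> \<alpha>) u = perm_orbit (\<sigma> \<circ> \<alpha>) x" using po_eq[OF perm x(2)] .
      moreover have "u < m" using po_sub[OF sap, of x] x by auto
      ultimately show "u \<in> corners M" using x by (simp add: corners_def Me)
    qed
    show "corners M \<subseteq> \<Union>C"
    proof
      fix u assume "u \<in> corners M"
      then have "u < m" "card (perm_orbit (\<sigma> \<circ> \<alpha>) u) = j0" by (auto simp: corners_def Me)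
      then have "perm_orbit (\<sigma> \<circ> \<alpha>) u \<in> C" unfolding C_def perm_cycles_def by auto
      then show "u \<in> \<Union>C" using po_self by blast
    qed
  qed
  have "j0 * card C = card (\<Union>C)"
  proof (rule card_partition)
    show "finite C" by (simp add: C_def perm_cycles_def)
    show "finite (\<Union>C)" using U by (simp add: corners_def)
    show "\<And>c. c \<in> C \<Longrightarrow> card c = j0" by (simp add: C_def)
    show "\<And>c1 c2. c1 \<in> C \<Longrightarrow> c2 \<in> C \<Longrightarrow> c1 \<noteq> c2 \<Longrightarrow> c1 \<inter> c2 = {}"
      unfolding C_def perm_cycles_def using po_disj[OF perm] by blast
  qed
  moreover have "card C = hA j0" using F(4)[OF j1] by (simp add: C_def)
  ultimately show ?thesis using U by simp
qed

end

context mainl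
begin

definition D where "D = Sigma A (\<lambda>M. corners M \<times> {\<pi>. \<pi> permutes {..<n}})"

definition FF where "FF d = (act (snd (snd d)) (Phi (fst d) (fst (snd d))), snd (snd d) (n - 1))"

lemma corners_sub: "corners M \<subseteq> {..<m}" by (auto simp: corners_def)

lemma card_D: "card D = card A * (j0 * hA j0 * fact n)"
proof -
  have fin: "finite (corners M \<times> {\<pi>. \<pi> permutes {..<n}})" for M
    by (rule finite_cartesian_product[OF finite_subset[OF corners_sub] finite_permutations]) auto
  have "card D = (\<Sum>M\<in>A. card (corners M \<times> {\<pi>. \<pi> permutes {..<n}}))"
    unfolding D_def by (rule card_SigmaI) (use finite_lbm fin in auto)
  also have "\<dots> = (\<Sum>M\<in>A. j0 * hA j0 * fact n)"
  proof (rule sum.cong)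
    fix M assume "M \<in> A"
    then show "card (corners M \<times> {\<pi>. \<pi> permutes {..<n}}) = j0 * hA j0 * fact n"
      using card_corners card_permutations[of "{..<n}" n] by (simp add: card_cartesian_product)
  qed simp
  finally show ?thesis by simp
qed

lemma FF_into: "FF ` D \<subseteq> B \<times> {..<n}"
proof
  fix z assume "z \<in> FF ` D"
  then obtain M u \<pi> where d: "M \<in> A" "u \<in> corners M" "\<pi> permutes {..<n}" and z: "z = FF (M, u, \<pi>)"
    unfolding D_def by auto
  have "act \<pi> (Phi M u) \<in> B" using act_lbm[OF d(3) Phi_in[OF d(1,2)]] .
  moreover have "\<pi> (n - 1) < n" using permutes_in_image[OF d(3), of "n - 1"] mn by simp
  ultimately show "z \<in> B \<times> {..<n}" using z by (simp add: FF_def)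
qed

lemma fiber:
  "card {d \<in> D. FF d = e} \<le> fact m"
proof (cases "{d \<in> D. FF d = e} = {}")
  case True then show ?thesis by (simp only: True card.empty le0)
next
  case False
  let ?Fb = "{d \<in> D. FF d = e}"
  obtain M0 u0 \<pi>0 where d0: "(M0, u0, \<pi>0) \<in> D" "FF (M0, u0, \<pi>0) = e" using False by auto
  have M0: "M0 \<in> A" "u0 \<in> corners M0" and p0: "\<pi>0 permutes {..<n}" using d0(1) unfolding D_def by auto
  define \<psi> where "\<psi> d = inv (snd (snd d)) \<circ> \<pi>0" for d :: "((nat \<Rightarrow> nat) \<times> (nat \<Rightarrow> nat)) \<times> nat \<times> (nat \<Rightarrow> nat)"
  have inP: "\<psi> d \<in> {\<rho>. \<rho> permutes {..<m}}" if dF: "d \<in> ?Fb" for d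
  proof -
    obtain M u \<pi> where de: "d = (M, u, \<pi>)" by (metis prod_cases3)
    have M: "M \<in> A" "u \<in> corners M" and p: "\<pi> permutes {..<n}" using dF de unfolding D_def by auto
    have e1: "act \<pi> (Phi M u) = act \<pi>0 (Phi M0 u0)" and e2: "\<pi> (n - 1) = \<pi>0 (n - 1)"
      using dF de d0(2) by (auto simp: FF_def)
    define \<rho> where "\<rho> = inv \<pi> \<circ> \<pi>0"
    have rp: "\<rho> permutes {..<n}" unfolding \<rho>_def using permutes_compose[OF p0 permutes_inv[OF p]] .
    have "act \<rho> (Phi M0 u0) = act (inv \<pi>) (act \<pi>0 (Phi M0 u0))"
      unfolding \<rho>_def using act_act[OF permutes_inv[OF p] p0] by simp
    also have "\<dots> = Phi M u" using e1 act_cancel[OF p] by metis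
    finally have ea: "act \<rho> (Phi M0 u0) = Phi M u" .
    let ?s1 = "fst (Phi M0 u0)" and ?s2 = "fst (Phi M u)"
    have cs: "cj \<rho> ?s1 = ?s2" using arg_cong[OF ea, of fst] by (simp add: act_def)
    have comm: "\<rho> (?s1 x) = ?s2 (\<rho> x)" for x
    proof -
      have "?s2 (\<rho> x) = cj \<rho> ?s1 (\<rho> x)" using cs by simp
      also have "\<dots> = \<rho> (?s1 x)" using permutes_inverses(2)[OF rp] by (simp add: cj_apply)
      finally show ?thesis by simp
    qed
    have rl: "\<rho> (n - 1) = n - 1" unfolding \<rho>_def using e2 permutes_inverses(2)[OF p] by (metis comp_apply)
    have a0: "snd M0 u0 < m" using M0 corners_sub[of M0] A_facts(2)[of "fst M0" "snd M0"] permutes_in_image by fastforce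
    have a1: "snd M u < m" using M corners_sub[of M] A_facts(2)[of "fst M" "snd M"] permutes_in_image by fastforce
    have s1: "?s1 k = Suc k" if "m \<le> k" "k < n - 1" for k using ins_mid_g[OF a0 that] by (simp add: Phi_def)
    have s2: "?s2 k = Suc k" if "m \<le> k" "k < n - 1" for k using ins_mid_g[OF a1 that] by (simp add: Phi_def)
    have "Phi M u \<in> B" using Phi_in[OF M] .
    then have "?s2 permutes {..<n}" unfolding labelled_bip_maps_def by (auto simp: case_prod_beta)
    then have i2: "inj ?s2" by (rule permutes_inj)
    have "\<rho> permutes {..<m}" using fix_tail[OF rp rl comm s1 s2 i2 mn] .
    then show ?thesis by (simp add: \<psi>_def de \<rho>_def)
  qed
  have inj: "inj_on \<psi> ?Fb"
  proof (rule inj_onI)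
    fix d1 d2 assume d1: "d1 \<in> ?Fb" and d2: "d2 \<in> ?Fb" and eq: "\<psi> d1 = \<psi> d2"
    obtain M1 u1 \<pi>1 where de1: "d1 = (M1, u1, \<pi>1)" by (metis prod_cases3)
    obtain M2 u2 \<pi>2 where de2: "d2 = (M2, u2, \<pi>2)" by (metis prod_cases3)
    have M1: "M1 \<in> A" "u1 \<in> corners M1" and p1: "\<pi>1 permutes {..<n}" using d1 de1 unfolding D_def by auto
    have M2: "M2 \<in> A" "u2 \<in> corners M2" and p2: "\<pi>2 permutes {..<n}" using d2 de2 unfolding D_def by auto
    have "inv \<pi>1 \<circ> \<pi>0 = inv \<pi>2 \<circ> \<pi>0" using eq by (simp add: \<psi>_def de1 de2)
    then have "inv \<pi>1 \<circ> \<pi>0 \<circ> inv \<pi>0 = inv \<pi>2 \<circ> \<pi>0 \<circ> inv \<pi>0" by simp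
    then have "inv \<pi>1 = inv \<pi>2" using permutes_inv_o(1)[OF p0] by (simp add: o_assoc[symmetric])
    then have pp: "\<pi>1 = \<pi>2" using inv_inv_eq[OF permutes_bij[OF p1]] inv_inv_eq[OF permutes_bij[OF p2]] by metis
    have "act \<pi>1 (Phi M1 u1) = act \<pi>2 (Phi M2 u2)" using d1 d2 de1 de2 by (auto simp: FF_def)
    then have "act (inv \<pi>1) (act \<pi>1 (Phi M1 u1)) = act (inv \<pi>1) (act \<pi>1 (Phi M2 u2))" using pp by simp
    then have "Phi M1 u1 = Phi M2 u2" using act_cancel[OF p1] by simp
    then have "M1 = M2 \<and> u1 = u2" using Phi_inj[OF M1 M2] by blast
    then show "d1 = d2" using de1 de2 pp by simp
  qed
  have "card ?Fb \<le> card {\<rho>. \<rho> permutes {..<m}}"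
    using card_inj_on_le[OF inj] inP finite_permutations[of "{..<m}"] by blast
  also have "\<dots> = fact m" using card_permutations[of "{..<m}" m] by simp
  finally show ?thesis .
qed

lemma main_count: "card A * (j0 * hA j0 * fact n) \<le> fact m * (card B * n)"
proof -
  have fD: "finite D"
  proof -
    have "D \<subseteq> A \<times> ({..<m} \<times> {\<pi>. \<pi> permutes {..<n}})" unfolding D_def using corners_sub by auto
    then show ?thesis using finite_lbm finite_permutations[of "{..<n}"] finite_subset by blast
  qed
  have "card D \<le> fact m * card (B \<times> {..<n})"
    by (rule fiber_le[OF fD FF_into]) (use finite_lbm fiber in auto)
  then show ?thesis using card_D by (simp add: card_cartesian_product)
qed

lemma main_ineq: "j0 * hA j0 * (card A div fact (m - 1)) \<le> m * (card B div fact (n - 1))"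
proof -
  define c where "c = j0 * hA j0"
  define a where "a = card A"
  define b where "b = card B"
  define qA where "qA = a div fact (m - 1)"
  define qB where "qB = b div fact (n - 1)"
  have n0: "0 < n" using mn by simp
  have bq: "b = fact (n - 1) * qB" using dvd_lbm[OF n0, of g hB] unfolding b_def qB_def by simp
  have aq: "fact (m - 1) * qA \<le> a" unfolding qA_def by (simp add: mult.commute div_times_less_eq_dividend)
  have fm: "fact m = m * fact (m - 1)" using fact_reduce[of m, where 'a = nat] m1 by simp
  have fn: "fact n = n * fact (n - 1)" using fact_reduce[of n, where 'a = nat] n0 by simp
  have mc: "a * (c * fact n) \<le> fact m * (b * n)" using main_count unfolding a_def b_def c_def .
  let ?K = "fact (m - 1) * (fact (n - 1) * n) :: nat"
  have "?K * (c * qA) = (fact (m - 1) * qA) * (c * fact n)" unfolding fn by (simp add: algebra_simps)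
  also have "\<dots> \<le> a * (c * fact n)" using aq by (rule mult_right_mono) simp
  also have "\<dots> \<le> fact m * (b * n)" using mc .
  also have "\<dots> = ?K * (m * qB)" unfolding fm bq by (simp add: algebra_simps)
  finally have "?K * (c * qA) \<le> ?K * (m * qB)" .
  moreover have "?K > 0" using n0 by simp
  ultimately have "c * qA \<le> m * qB" by simp
  then show ?thesis unfolding c_def qA_def qB_def a_def b_def .
qed

end

lemma fsize_on:
  assumes "finite S" "{j. h j \<noteq> 0} \<subseteq> S"
  shows "fsize h = (\<Sum>j\<in>S. int j * h j)"
  unfolding fsize_def using assms by (intro sum.mono_neutral_left) auto

lemma beta_neg: "h j < 0 \<Longrightarrow> beta g h = 0"
  unfolding beta_def by auto

lemma beta_pos: "(\<forall>j. h j \<ge> 0) \<Longrightarrow>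
  beta g h = card (labelled_bip_maps g (\<lambda>j. nat (h j)) (nat (fsize h))) div fact (nat (fsize h) - 1)"
proof -
  assume a: "\<forall>j. h j \<ge> 0"
  then have "\<not> (\<exists>j. h j < 0)" by (simp add: not_less)
  then show ?thesis unfolding beta_def Let_def by simp
qed

theorem lemma20:
  fixes f :: "nat \<Rightarrow> nat" and g p j0 :: nat
  assumes "face_deg_seq f" and "1 \<le> j0" and "j0 \<le> p"
  shows "fsize (\<lambda>j. int (f j)) * int (beta g (\<lambda>j. int (f j) - ind_seq j0 j))
           \<ge> int j0 * int (f j0) * int (beta g (\<lambda>j. int (f j) - ind_seq p j))
    \<and> (\<forall>\<delta>::real. \<delta> > 0 \<longrightarrow> real (j0 * f j0) \<ge> \<delta> * real_of_int (fsize (\<lambda>j. int (f j))) \<longrightarrow>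
          real (beta g (\<lambda>j. int (f j) - ind_seq j0 j))
            \<ge> \<delta> * real (beta g (\<lambda>j. int (f j) - ind_seq p j)))"
proof -
  define S where "S = {j. f j \<noteq> 0} \<union> {j0, p}"
  have fS: "finite S" using assms(1) unfolding S_def face_deg_seq_def by simp
  define N where "N = fsize (\<lambda>j. int (f j))"
  define hA where "hA = (\<lambda>j. int (f j) - ind_seq p j)"
  define hB where "hB = (\<lambda>j. int (f j) - ind_seq j0 j)"
  have NS: "N = (\<Sum>j\<in>S. int j * int (f j))"
    unfolding N_def by (rule fsize_on[OF fS]) (auto simp: S_def)
  have Nge: "N \<ge> int j * int (f j)" if "j \<in> S" for j
    unfolding NS using fS that by (intro member_le_sum) auto
  have N0: "N \<ge> 0" unfolding NS by (intro sum_nonneg) auto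
  have ind_sum: "(\<Sum>j\<in>S. int j * ind_seq q j) = int q" if "q \<in> S" for q
  proof -
    have "(\<Sum>j\<in>S. int j * ind_seq q j) = (\<Sum>j\<in>S. if j = q then int q else 0)"
      by (rule sum.cong) (auto simp: ind_seq_def)
    also have "\<dots> = int q" using fS that by simp
    finally show ?thesis .
  qed
  have fsA: "fsize hA = N - int p"
  proof -
    have "fsize hA = (\<Sum>j\<in>S. int j * hA j)"
      by (rule fsize_on[OF fS]) (auto simp: S_def hA_def ind_seq_def)
    also have "\<dots> = N - (\<Sum>j\<in>S. int j * ind_seq p j)"
      unfolding NS hA_def by (simp add: right_diff_distrib sum_subtractf)
    finally show ?thesis using ind_sum[of p] by (simp add: S_def)
  qed
  have fsB: "fsize hB = N - int j0"
  proof -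
    have "fsize hB = (\<Sum>j\<in>S. int j * hB j)"
      by (rule fsize_on[OF fS]) (auto simp: S_def hB_def ind_seq_def)
    also have "\<dots> = N - (\<Sum>j\<in>S. int j * ind_seq j0 j)"
      unfolding NS hB_def by (simp add: right_diff_distrib sum_subtractf)
    finally show ?thesis using ind_sum[of j0] by (simp add: S_def)
  qed
  have part1: "N * int (beta g hB) \<ge> int j0 * int (f j0) * int (beta g hA)"
  proof (cases "f p = 0 \<or> f j0 = 0")
    case True
    then have z: "int j0 * int (f j0) * int (beta g hA) = 0"
    proof
      assume "f p = 0"
      then have "hA p < 0" by (simp add: hA_def ind_seq_def)
      then show ?thesis using beta_neg by simp
    qed simp
    have "0 \<le> N * int (beta g hB)" using N0 by simp
    then show ?thesis using z by linarith
  next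
    case False
    then have fp: "f p \<ge> 1" and fj: "f j0 \<ge> 1" by auto
    show ?thesis
    proof (cases "p = j0")
      case True
      have "int j0 * int (f j0) \<le> N" using Nge[of j0] by (simp add: S_def)
      then show ?thesis using True hA_def hB_def by (simp add: mult_right_mono)
    next
      case False
      then have jp: "j0 < p" using assms(3) by simp
      have "(\<Sum>j\<in>{j0, p}. int j * int (f j)) \<le> N"
        unfolding NS using fS by (intro sum_mono2) (auto simp: S_def)
      then have Nbig: "N \<ge> int j0 * int (f j0) + int p * int (f p)" using False by simp
      have "int p * 1 \<le> int p * int (f p)" by (rule mult_left_mono) (use fp in auto)
      moreover have "int j0 * 1 \<le> int j0 * int (f j0)" by (rule mult_left_mono) (use fj in auto)
      ultimately have Nb: "N \<ge> int j0 + int p" using Nbig by linarith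
      define m where "m = nat (N - int p)"
      define n where "n = nat (N - int j0)"
      have mI: "int m = N - int p" and nI: "int n = N - int j0" using Nb by (auto simp: m_def n_def)
      have hApos: "\<forall>j. hA j \<ge> 0" using fp by (auto simp: hA_def ind_seq_def)
      have hBpos: "\<forall>j. hB j \<ge> 0" using fj by (auto simp: hB_def ind_seq_def)
      have bA: "beta g hA = card (labelled_bip_maps g (\<lambda>j. nat (hA j)) m) div fact (m - 1)"
        using beta_pos[OF hApos] fsA by (simp add: m_def)
      have bB: "beta g hB = card (labelled_bip_maps g (\<lambda>j. nat (hB j)) n) div fact (n - 1)"
        using beta_pos[OF hBpos] fsB by (simp add: n_def)
      interpret L: mainl g m n j0 p "\<lambda>j. nat (hA j)" "\<lambda>j. nat (hB j)"
      proof
        show "1 \<le> m" using mI Nb assms(2) by linarith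
        show "m < n" using mI nI jp by linarith
        show "p = j0 + (n - m)" using mI nI jp by linarith
        show "1 \<le> j0" using assms(2) .
        fix j
        show "nat (hB j) + (if j = j0 then 1 else 0) = nat (hA j) + (if j = p then 1 else 0)"
          using fp fj False by (auto simp: hA_def hB_def ind_seq_def)
      qed
      have hAj0: "nat (hA j0) = f j0" using False by (simp add: hA_def ind_seq_def)
      have mi: "j0 * f j0 * beta g hA \<le> m * beta g hB"
        using L.main_ineq unfolding bA bB hAj0 .
      then have "int (j0 * f j0 * beta g hA) \<le> int (m * beta g hB)" by (simp only: of_nat_le_iff)
      then have "int j0 * int (f j0) * int (beta g hA) \<le> int m * int (beta g hB)"
        by (simp only: of_nat_mult)
      also have "\<dots> \<le> N * int (beta g hB)" using mI by (intro mult_right_mono) auto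
      finally show ?thesis .
    qed
  qed
  have part2: "real (beta g hB) \<ge> \<delta> * real (beta g hA)"
    if d0: "\<delta> > 0" and dd: "real (j0 * f j0) \<ge> \<delta> * real_of_int N" for \<delta> :: real
  proof (cases "beta g hA = 0")
    case True then show ?thesis by simp
  next
    case False
    then have "f p \<noteq> 0" using beta_neg[of hA p g] by (auto simp: hA_def ind_seq_def)
    then have "N \<ge> int p * int (f p)" using Nge[of p] by (simp add: S_def)
    moreover have "int p * 1 \<le> int p * int (f p)" by (rule mult_left_mono) (use \<open>f p \<noteq> 0\<close> in auto)
    moreover have "int p \<ge> 1" using assms(2,3) by simp
    ultimately have Npos: "N > 0" by linarith
    have "real_of_int (int j0 * int (f j0) * int (beta g hA)) \<le> real_of_int (N * int (beta g hB))"
      using part1 by (simp only: of_int_le_iff)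
    then have p1: "real_of_int N * real (beta g hB) \<ge> real (j0 * f j0) * real (beta g hA)"
      by simp
    have "real_of_int N * (\<delta> * real (beta g hA)) = (\<delta> * real_of_int N) * real (beta g hA)" by simp
    also have "\<dots> \<le> real (j0 * f j0) * real (beta g hA)" using dd by (intro mult_right_mono) auto
    also have "\<dots> \<le> real_of_int N * real (beta g hB)" using p1 .
    finally show ?thesis using Npos by (simp add: mult_le_cancel_left_pos)
  qed
  show ?thesis using part1 part2 unfolding N_def hA_def hB_def by blast
qed

end
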